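(* Let $K$ be a non-Archimedean locally compact field of characteristic $p>0$ with group of 1-units $U=1+M_K$, and let $\Lambda$ be the set of locally analytic group endomorphisms $U\to U$. Let $f\in\Lambda$ with $f(1+x)=\sum_{n=0}^{\infty}a_nx^n$ for all $x\in M_K$, where $\sum a_nx^n\in 1+x\mathbb{F}_p[[x]]$. Then for each $n\ge0$, $a_n=0$ if and only if the Hasse derivative $\mathsf{D}^{(n)}f(1+x)$ is identically zero. In particular, $a_1=0$ if and only if $f(1+x)=g(1+x)^p$ for some $g\in\Lambda$.
   Context: $M_K$ is the maximal ideal of the ring of integers $R_K$ of $K$; with constant field $\mathbb{F}$ of order $q$ and uniformizer $\pi$, $K=\mathbb{F}((\pi))$, $U=1+\pi\mathbb{F}[[\pi]]$, and $|x|=q^{-v(x)}$. A continuous function $f$ on a ball $B_{\alpha,t}=\{u\in R_K:|u-\alpha|\le t\}$, $t=|\rho|$, is analytic there if $f(u)=\sum_{n\ge0}c_n\left(\frac{u-\alpha}{\rho}\right)^n$ with $c_n\in K$, $c_n\to0$; $f:U\to K$ is locally analytic if each $\alpha\in U$ has a ball $B_{\alpha,t_\alpha}\subset U$, $t_\alpha>0$, on which $f$ is analytic. The Hasse derivative of order $m$ of $f(1+x)=\sum_k a_kx^k$ is $\mathsf{D}^{(m)}f(1+x)=\sum_{k\ge m}\binom{k}{m}a_kx^{k-m}$. *)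

theory Defs
  imports "HOL-Analysis.Analysis" "HOL-Computational_Algebra.Formal_Laurent_Series"
begin

text \<open>The local field K = F((pi)) is modelled as the type 'a fls of formal Laurent
series over a finite field 'a (the constant field F, of order q = CARD('a)).
Convergence in K is the library (pi-adic) topology on fls.\<close>

definition absK :: "'a::{field,finite} fls \<Rightarrow> real" where
  "absK x = (if x = 0 then 0 else real CARD('a) powr (- real_of_int (fls_subdegree x)))"

definition RK :: "'a::{field,finite} fls set" where
  "RK = {u. absK u \<le> 1}"

definition MK :: "'a::{field,finite} fls set" where
  "MK = {x. absK x < 1}"

definition UK :: "'a::{field,finite} fls set" where
  "UK = (\<lambda>x. 1 + x) ` MK"

definition ballK :: "'a::{field,finite} fls \<Rightarrow> real \<Rightarrow> 'a fls set" where
  "ballK \<alpha> t = {u \<in> RK. absK (u - \<alpha>) \<le> t}"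

definition analytic_on_ballK ::
  "('a::{field,finite} fls \<Rightarrow> 'a fls) \<Rightarrow> 'a fls \<Rightarrow> 'a fls \<Rightarrow> bool" where
  "analytic_on_ballK f \<alpha> \<rho> \<longleftrightarrow>
     continuous_on (ballK \<alpha> (absK \<rho>)) f \<and>
     (\<exists>c :: nat \<Rightarrow> 'a fls. c \<longlonglongrightarrow> 0 \<and>
        (\<forall>u \<in> ballK \<alpha> (absK \<rho>). (\<lambda>n. c n * ((u - \<alpha>) / \<rho>) ^ n) sums f u))"

definition locally_analyticK :: "('a::{field,finite} fls \<Rightarrow> 'a fls) \<Rightarrow> bool" where
  "locally_analyticK f \<longleftrightarrow>
     (\<forall>\<alpha> \<in> UK. \<exists>\<rho>. \<rho> \<noteq> 0 \<and> ballK \<alpha> (absK \<rho>) \<subseteq> UK \<and> analytic_on_ballK f \<alpha> \<rho>)"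

definition LambdaK :: "('a::{field,finite} fls \<Rightarrow> 'a fls) set" where
  "LambdaK = {f. (\<forall>u \<in> UK. f u \<in> UK) \<and> (\<forall>u \<in> UK. \<forall>v \<in> UK. f (u * v) = f u * f v)
                 \<and> locally_analyticK f}"

definition prime_subfield :: "'a::{field,finite} set" where
  "prime_subfield = range of_nat"

end

theory Submission
  imports Defs
begin
unbundle fps_syntax
unbundle no vec_syntax

lemma card_ge2: "CARD('a::{field,finite}) \<ge> 2"
proof -
  have "card {0::'a, 1} = 2" by simp
  moreover have "card {0::'a,1} \<le> CARD('a)" by (rule card_mono) auto
  ultimately show ?thesis by simp
qed

lemma absK_lt1_iff: "absK (x::'a::{field,finite} fls) < 1 \<longleftrightarrow> x = 0 \<or> fls_subdegree x > 0"
proof (cases "x = 0")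
  case False
  have q: "real CARD('a) > 1" using card_ge2[where 'a='a] by simp
  have "real CARD('a) powr (- real_of_int (fls_subdegree x)) < real CARD('a) powr 0
        \<longleftrightarrow> - real_of_int (fls_subdegree x) < 0"
    using q by (rule powr_less_cancel_iff)
  then show ?thesis using False q by (simp add: absK_def)
qed (simp add: absK_def)

lemma MK_iff: "(x::'a::{field,finite} fls) \<in> MK \<longleftrightarrow> (\<exists>c. c $ 0 = 0 \<and> x = fps_to_fls c)"
proof
  assume "x \<in> MK"
  then have h: "x = 0 \<or> fls_subdegree x > 0" by (simp add: MK_def absK_lt1_iff)
  show "\<exists>c. c $ 0 = 0 \<and> x = fps_to_fls c"
  proof (cases "x = 0")
    case True then show ?thesis by (intro exI[of _ 0]) simp
  next
    case False
    with h have s: "fls_subdegree x > 0" by simp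
    then have "x $$ 0 = 0" by (simp add: fls_eq0_below_subdegree)
    with s show ?thesis by (intro exI[of _ "fls_regpart x"]) simp
  qed
next
  assume "\<exists>c. c $ 0 = 0 \<and> x = fps_to_fls c"
  then obtain c where c: "c $ 0 = 0" "x = fps_to_fls c" by blast
  show "x \<in> MK"
  proof (cases "c = 0")
    case True then show ?thesis using c by (simp add: MK_def absK_def)
  next
    case False
    then have "subdegree c \<noteq> 0" using c(1) nth_subdegree_nonzero[of c] by metis
    then show ?thesis using c by (simp add: MK_def absK_lt1_iff fls_subdegree_fls_to_fps)
  qed
qed

lemma prime_CHAR_ff: "prime CHAR('a::{field,finite})"
  by (rule prime_CHAR_semidom) (simp add: finite_imp_CHAR_pos)

lemma frob_fls: "((x::'a::{field,finite} fls) + y) ^ CHAR('a) = x ^ CHAR('a) + y ^ CHAR('a)"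
  by (rule freshmans_dream) (simp_all add: prime_CHAR_ff)

lemma frob_fps: "((x::'a::{field,finite} fps) + y) ^ CHAR('a) = x ^ CHAR('a) + y ^ CHAR('a)"
  by (rule freshmans_dream) (simp_all add: prime_CHAR_ff)


lemma dist_fls_le:
  fixes x y :: "'b::group_add fls"
  assumes "\<And>k. k < int N \<Longrightarrow> (x - y) $$ k = 0"
  shows "dist x y \<le> (1/2::real) ^ N"
proof (cases "x = y")
  case True then show ?thesis by simp
next
  case False
  then have ne: "x - y \<noteq> 0" by simp
  have s: "int N \<le> fls_subdegree (x - y)" by (rule fls_subdegree_geI[OF ne assms])
  then have "dist x y = inverse (2 ^ nat (fls_subdegree (x - y)))" using False unfolding dist_fls_def by simp
  also have "\<dots> \<le> inverse (2 ^ N)"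
  proof (rule le_imp_inverse_le)
    show "(2::real) ^ N \<le> 2 ^ nat (fls_subdegree (x - y))" by (rule power_increasing) (use s in auto)
  qed simp
  also have "\<dots> = (1/2)^N" by (simp add: power_one_over inverse_eq_divide)
  finally show ?thesis .
qed

lemma fls_tendsto:
  assumes "\<And>N k. k < int N \<Longrightarrow> (s N - L) $$ k = 0"
  shows "s \<longlonglongrightarrow> (L::'b::group_add fls)"
proof -
  have "(\<lambda>N. dist (s N) L) \<longlonglongrightarrow> 0"
  proof (rule Lim_null_comparison[where g="\<lambda>N. (1/2::real)^N"])
    show "\<forall>\<^sub>F N in sequentially. norm (dist (s N) L) \<le> (1 / 2) ^ N"
    proof (rule always_eventually, intro allI)
      fix N
      have "dist (s N) L \<le> (1/2)^N" by (rule dist_fls_le) (rule assms)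
      then show "norm (dist (s N) L) \<le> (1/2)^N" by (simp only: real_norm_def abs_of_nonneg[OF zero_le_dist])
    qed
    show "(\<lambda>N. (1/2::real) ^ N) \<longlonglongrightarrow> 0" by (rule LIMSEQ_realpow_zero) auto
  qed
  then show ?thesis by (rule tendsto_dist_iff[THEN iffD2])
qed

lemma fps_to_fls_sum: "fps_to_fls (sum f A) = (\<Sum>i\<in>A. fps_to_fls (f i))"
  by (induction A rule: infinite_finite_induct) auto

lemma bridge:
  fixes b :: "'a::field fps"
  assumes b0: "b $ 0 = 0"
  shows "(\<lambda>n. fls_const (c n) * fps_to_fls b ^ n) sums fps_to_fls (Abs_fps c oo b)"
  unfolding sums_def
proof (rule fls_tendsto)
  fix N k assume k: "k < int N"
  have eq: "(\<Sum>n<N. fls_const (c n) * fps_to_fls b ^ n) = fps_to_fls (\<Sum>n<N. fps_const (c n) * b ^ n)"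
    by (simp add: fps_to_fls_sum fls_times_fps_to_fls fps_to_fls_power)
  show "((\<Sum>n<N. fls_const (c n) * fps_to_fls b ^ n) - fps_to_fls (Abs_fps c oo b)) $$ k = 0"
  proof (cases "k < 0")
    case True then show ?thesis by (simp add: eq flip: fps_to_fls_minus)
  next
    case False
    define j where "j = nat k"
    have jN: "j < N" using k False j_def by simp
    have "(\<Sum>n<N. fps_const (c n) * b ^ n) $ j = (\<Sum>n\<in>{0..j}. c n * b ^ n $ j)"
      unfolding fps_sum_nth fps_mult_left_const_nth
    proof (rule sum.mono_neutral_right)
      show "{0..j} \<subseteq> {..<N}" using jN by auto
      show "\<forall>i\<in>{..<N} - {0..j}. c i * b ^ i $ j = 0"
        using startsby_zero_power_prefix[OF b0] by auto
    qed auto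
    then have "(\<Sum>n<N. fps_const (c n) * b ^ n) $ j = (Abs_fps c oo b) $ j" by (simp add: fps_compose_nth)
    then show ?thesis using False by (simp add: eq j_def flip: fps_to_fls_minus)
  qed
qed


definition Ehas :: "(nat \<Rightarrow> 'a::comm_ring_1) \<Rightarrow> nat \<Rightarrow> 'a fps" where
  "Ehas a m = Abs_fps (\<lambda>j. of_nat ((j + m) choose m) * a (j + m))"

lemma taylor_nth:
  fixes a :: "nat \<Rightarrow> 'a::comm_ring_1" and H :: "'a fps"
  assumes H0: "H $ 0 = 0"
  shows "(Abs_fps a oo (fps_X + H)) $ k = (\<Sum>m\<le>k. (Ehas a m * H ^ m) $ k)"
proof -
  define g where "g m j = of_nat ((j + m) choose m) * a (j + m) * (H ^ m $ (k - j))" for m j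
  have L: "(Abs_fps a oo (fps_X + H)) $ k = (\<Sum>n\<le>k. \<Sum>m\<le>n. g m (n - m))"
  proof -
    have "(Abs_fps a oo (fps_X + H)) $ k = (\<Sum>n\<le>k. a n * ((fps_X + H) ^ n $ k))"
      by (simp add: fps_compose_nth atLeast0AtMost)
    also have "\<dots> = (\<Sum>n\<le>k. \<Sum>m\<le>n. g m (n - m))"
    proof (rule sum.cong[OF refl])
      fix n assume n: "n \<in> {..k}"
      have "(fps_X + H) ^ n = (\<Sum>m\<le>n. fps_const (of_nat (n choose m)) * (H ^ m * fps_X ^ (n - m)))"
        using binomial_ring[of H fps_X n] by (simp add: add.commute mult.assoc fps_of_nat)
      then have "(fps_X + H) ^ n $ k = (\<Sum>m\<le>n. of_nat (n choose m) * H ^ m $ (k - (n - m)))"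
        using n by (auto simp: fps_sum_nth fps_X_power_mult_right_nth intro!: sum.cong)
      then show "a n * ((fps_X + H) ^ n $ k) = (\<Sum>m\<le>n. g m (n - m))"
        by (auto simp: g_def sum_distrib_left mult_ac intro!: sum.cong)
    qed
    finally show ?thesis .
  qed
  have T: "(\<Sum>n\<le>k. \<Sum>m\<le>n. g m (n - m)) = (\<Sum>(m,j)\<in>{(m,j). m + j \<le> k}. g m j)"
    by (rule sum.triangle_reindex_eq[symmetric])
  have "{(m,j). m + j \<le> k} = Sigma {..k} (\<lambda>m. {..k-m})" by auto
  then have S: "(\<Sum>(m,j)\<in>{(m,j). m + j \<le> k}. g m j) = (\<Sum>m\<le>k. \<Sum>j\<le>k - m. g m j)"
    by (simp add: sum.Sigma)
  have R: "(\<Sum>m\<le>k. (Ehas a m * H ^ m) $ k) = (\<Sum>m\<le>k. \<Sum>j\<le>k - m. g m j)"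
  proof (rule sum.cong[OF refl])
    fix m assume m: "m \<in> {..k}"
    have "(Ehas a m * H ^ m) $ k = (\<Sum>j\<le>k. g m j)"
      by (simp add: fps_mult_nth Ehas_def g_def atLeast0AtMost)
    also have "\<dots> = (\<Sum>j\<le>k - m. g m j)"
    proof (rule sum.mono_neutral_right)
      show "\<forall>j\<in>{..k} - {..k - m}. g m j = 0"
      proof
        fix j assume j: "j \<in> {..k} - {..k - m}"
        then have "k - j < m" using m by auto
        then have "H ^ m $ (k - j) = 0" using startsby_zero_power_prefix[OF H0, of m] by blast
        then show "g m j = 0" by (simp add: g_def)
      qed
    qed auto
    finally show "(Ehas a m * H ^ m) $ k = (\<Sum>j\<le>k - m. g m j)" .
  qed
  show ?thesis using L T S R by simp
qed


lemma compose_XN_nth: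
  fixes a :: "nat \<Rightarrow> 'a::comm_ring_1"
  assumes "N \<ge> 1" "j \<le> k"
  shows "(Abs_fps a oo fps_X ^ N) $ j = (\<Sum>m\<le>k. fps_const (a m) * fps_X ^ (N * m)) $ j"
proof -
  have "(Abs_fps a oo fps_X ^ N) $ j = (\<Sum>i\<in>{0..j}. a i * (if j = N * i then 1 else 0))"
    by (simp add: fps_compose_nth power_mult[symmetric] fps_X_power_nth)
  also have "\<dots> = (\<Sum>i\<le>k. a i * (if j = N * i then 1 else 0))"
  proof (rule sum.mono_neutral_left)
    show "\<forall>i\<in>{..k} - {0..j}. a i * (if j = N * i then 1 else 0) = 0"
    proof
      fix i assume "i \<in> {..k} - {0..j}"
      then have "j < i" by auto
      also have "i \<le> N * i" using assms(1) by simp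
      finally show "a i * (if j = N * i then 1 else 0) = 0" by simp
    qed
  qed (use assms in auto)
  also have "\<dots> = (\<Sum>m\<le>k. fps_const (a m) * fps_X ^ (N * m)) $ j"
    by (simp add: fps_sum_nth fps_X_power_nth)
  finally show ?thesis .
qed

lemma K_from_FE:
  fixes a :: "nat \<Rightarrow> 'a::idom"
  assumes FE: "\<And>N. N \<ge> 1 \<Longrightarrow> Abs_fps a oo (fps_X + fps_X ^ N * (1 + fps_X)) = Abs_fps a * (Abs_fps a oo fps_X ^ N)"
  shows "Ehas a m * (1 + fps_X) ^ m = fps_const (a m) * Abs_fps a"
proof -
  define A where "A = Abs_fps a"
  define D where "D m = Ehas a m * (1 + fps_X) ^ m - fps_const (a m) * A" for m
  have step1: "(\<Sum>m\<le>k. (D m * fps_X ^ (N * m)) $ k) = 0" if N: "N \<ge> 1" for N k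
  proof -
    define H :: "'a fps" where "H = fps_X ^ N * (1 + fps_X)"
    have H0: "H $ 0 = 0" using N by (simp add: H_def)
    have Hm: "H ^ m = (1 + fps_X) ^ m * fps_X ^ (N * m)" for m
      by (simp add: H_def power_mult_distrib power_mult mult.commute)
    have lhs: "(A oo (fps_X + H)) $ k = (\<Sum>m\<le>k. (Ehas a m * (1 + fps_X) ^ m * fps_X ^ (N * m)) $ k)"
      unfolding A_def by (simp add: taylor_nth[OF H0] Hm mult.assoc)
    define T where "T = (\<Sum>m\<le>k. fps_const (a m) * fps_X ^ (N * m))"
    have "(A * (A oo fps_X ^ N)) $ k = (A * T) $ k"
      unfolding fps_mult_nth
      by (rule sum.cong[OF refl]) (simp add: A_def T_def compose_XN_nth[OF N])
    also have "\<dots> = (\<Sum>m\<le>k. (fps_const (a m) * A * fps_X ^ (N * m)) $ k)"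
      by (simp add: T_def sum_distrib_left fps_sum_nth mult_ac)
    finally have rhs: "(A * (A oo fps_X ^ N)) $ k = (\<Sum>m\<le>k. (fps_const (a m) * A * fps_X ^ (N * m)) $ k)" .
    have "(A oo (fps_X + H)) $ k = (A * (A oo fps_X ^ N)) $ k"
      using FE[OF N] by (simp add: A_def H_def)
    with lhs rhs have "(\<Sum>m\<le>k. (Ehas a m * (1 + fps_X) ^ m * fps_X ^ (N * m)) $ k)
        - (\<Sum>m\<le>k. (fps_const (a m) * A * fps_X ^ (N * m)) $ k) = 0" by simp
    then show ?thesis
      by (simp add: D_def sum_subtractf[symmetric] left_diff_distrib)
  qed
  have "D m = 0" for m
  proof (induction m rule: less_induct)
    case (less m)
    show "D m = 0"
    proof (rule fps_ext)
      fix d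
      define N where "N = Suc d"
      define k where "k = N * m + d"
      have "(\<Sum>m'\<le>k. (D m' * fps_X ^ (N * m')) $ k) = (\<Sum>m'\<le>k. if m' = m then D m $ d else 0)"
      proof (rule sum.cong[OF refl])
        fix m' assume m': "m' \<in> {..k}"
        show "(D m' * fps_X ^ (N * m')) $ k = (if m' = m then D m $ d else 0)"
        proof (cases m' m rule: linorder_cases)
          case less
          then show ?thesis using less.IH by simp
        next
          case equal
          then show ?thesis by (simp add: fps_X_power_mult_right_nth k_def)
        next
          case greater
          then have "N * (m + 1) \<le> N * m'" by (intro mult_le_mono2) simp
          then have "k < N * m'" by (simp add: k_def N_def)
          then show ?thesis using greater by (simp add: fps_X_power_mult_right_nth)
        qed
      qed
      also have "\<dots> = D m $ d"
      proof -
        have "m \<le> k" unfolding k_def N_def by simp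
        then show ?thesis by simp
      qed
      finally show "D m $ d = 0 $ d" using step1[of N k] by (simp add: N_def)
    qed
  qed
  then show ?thesis by (simp add: D_def A_def)
qed


lemma compose_trunc:
  fixes c :: "'a::comm_ring_1 fps"
  assumes b0: "c $ 0 = 0" and jN: "j < M"
  shows "(Abs_fps e oo c) $ j = (\<Sum>n<M. fps_const (e n) * c ^ n) $ j"
proof -
  have "(\<Sum>n<M. fps_const (e n) * c ^ n) $ j = (\<Sum>n\<in>{0..j}. e n * c ^ n $ j)"
    unfolding fps_sum_nth fps_mult_left_const_nth
  proof (rule sum.mono_neutral_right)
    show "{0..j} \<subseteq> {..<M}" using jN by auto
    show "\<forall>i\<in>{..<M} - {0..j}. e i * c ^ i $ j = 0"
      using startsby_zero_power_prefix[OF b0] by auto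
  qed auto
  then show ?thesis by (simp add: fps_compose_nth)
qed

lemma pow_agree:
  fixes x y :: "'a::comm_ring_1 fps"
  assumes "\<forall>j<M. x $ j = y $ j"
  shows "j < M \<Longrightarrow> (x ^ i) $ j = (y ^ i) $ j"
proof (induction i arbitrary: j)
  case 0 then show ?case by simp
next
  case (Suc i)
  show ?case unfolding power_Suc fps_mult_nth
  proof (rule sum.cong[OF refl])
    fix t assume "t \<in> {0..j}"
    then have "t < M" "j - t < M" using Suc.prems by auto
    then show "x $ t * x ^ i $ (j - t) = y $ t * y ^ i $ (j - t)"
      using assms Suc.IH by simp
  qed
qed

lemma compose_agree:
  fixes x y :: "'a::comm_ring_1 fps"
  assumes "\<forall>j<M. x $ j = y $ j" "j < M"
  shows "(B oo x) $ j = (B oo y) $ j"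
  unfolding fps_compose_nth
proof (rule sum.cong[OF refl])
  fix i assume "i \<in> {0..j}"
  show "B $ i * x ^ i $ j = B $ i * y ^ i $ j" using pow_agree[OF assms(1) assms(2)] by simp
qed

lemma frob_power_vanish:
  fixes w :: "'a::{field,finite} fps"
  assumes "\<forall>j<N. w $ j = 0" "k < N"
  shows "(w ^ CHAR('a)) $ k = 0"
proof (cases "w = 0")
  case True
  then show ?thesis using prime_CHAR_ff[where 'a='a] by (simp add: zero_power prime_gt_0_nat)
next
  case False
  have "N \<le> subdegree w" by (rule subdegree_geI[OF False]) (use assms in auto)
  moreover have "1 \<le> CHAR('a)" using prime_gt_0_nat[OF prime_CHAR_ff[where 'a='a]] by simp
  ultimately have "k < subdegree (w ^ CHAR('a))" using assms(2)
    by (simp add: order_less_le_trans[OF _ mult_le_mono[of 1 "CHAR('a)" N "subdegree w", simplified]])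
  then show ?thesis by (rule nth_less_subdegree_zero)
qed

lemma frob_sum_fps:
  fixes f :: "'b \<Rightarrow> 'a::{field,finite} fps"
  shows "(\<Sum>i\<in>A. f i) ^ CHAR('a) = (\<Sum>i\<in>A. f i ^ CHAR('a))"
proof (induction A rule: infinite_finite_induct)
  case (infinite A)
  then show ?case using prime_CHAR_ff[where 'a='a] by (simp add: zero_power prime_gt_0_nat)
next
  case empty
  then show ?case using prime_CHAR_ff[where 'a='a] by (simp add: zero_power prime_gt_0_nat)
next
  case (insert x F)
  then show ?case by (simp add: frob_fps)
qed

lemma frob_a: "((x::'a::{field,finite}) + y) ^ CHAR('a) = x ^ CHAR('a) + y ^ CHAR('a)"
  by (rule freshmans_dream) (simp_all add: prime_CHAR_ff)

lemma prime_subfield_frob: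
  assumes "(x::'a::{field,finite}) \<in> prime_subfield"
  shows "x ^ CHAR('a) = x"
proof -
  obtain k where k: "x = of_nat k" using assms by (auto simp: prime_subfield_def)
  have "(of_nat k :: 'a) ^ CHAR('a) = of_nat k"
  proof (induction k)
    case 0 then show ?case using prime_CHAR_ff[where 'a='a] by (simp add: zero_power prime_gt_0_nat)
  next
    case (Suc k) then show ?case by (simp add: frob_a)
  qed
  then show ?thesis using k by simp
qed

lemma frob_inj_fls:
  fixes x y :: "'a::{field,finite} fls"
  assumes "x ^ CHAR('a) = y ^ CHAR('a)"
  shows "x = y"
proof -
  have "x ^ CHAR('a) = ((x - y) + y) ^ CHAR('a)" by simp
  also have "\<dots> = (x - y) ^ CHAR('a) + y ^ CHAR('a)" by (rule frob_fls)
  finally have "(x - y) ^ CHAR('a) = 0" using assms by simp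
  then show ?thesis by simp
qed


lemma UK_iff: "(u::'a::{field,finite} fls) \<in> UK \<longleftrightarrow> (\<exists>c. c $ 0 = 0 \<and> u = 1 + fps_to_fls c)"
proof
  assume "u \<in> UK"
  then obtain x where x: "x \<in> MK" "u = 1 + x" by (auto simp: UK_def)
  from MK_iff[THEN iffD1, OF x(1)] obtain c where "c $ 0 = 0" "x = fps_to_fls c" by blast
  then show "\<exists>c. c $ 0 = 0 \<and> u = 1 + fps_to_fls c" using x(2) by blast
next
  assume "\<exists>c. c $ 0 = 0 \<and> u = 1 + fps_to_fls c"
  then obtain c where c: "c $ 0 = 0" "u = 1 + fps_to_fls c" by blast
  have "fps_to_fls c \<in> MK" using c(1) by (intro MK_iff[THEN iffD2]) blast
  then show "u \<in> UK" using c(2) by (simp add: UK_def)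
qed

lemma f_eval:
  fixes f :: "'a::{field,finite} fls \<Rightarrow> 'a fls"
  assumes hs: "\<forall>x \<in> MK. (\<lambda>n. fls_const (a n) * x ^ n) sums f (1 + x)"
    and b0: "b $ 0 = 0"
  shows "f (1 + fps_to_fls b) = fps_to_fls (Abs_fps a oo b)"
proof -
  have "fps_to_fls b \<in> MK" using b0 MK_iff by blast
  then have "(\<lambda>n. fls_const (a n) * fps_to_fls b ^ n) sums f (1 + fps_to_fls b)" using hs by blast
  from sums_unique2[OF this bridge[OF b0]] show ?thesis .
qed

lemma FE_f:
  fixes f :: "'a::{field,finite} fls \<Rightarrow> 'a fls"
  assumes mult: "\<forall>u\<in>UK. \<forall>v\<in>UK. f (u * v) = f u * f v"
    and hs: "\<forall>x \<in> MK. (\<lambda>n. fls_const (a n) * x ^ n) sums f (1 + x)"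
    and N: "N \<ge> 1"
  shows "Abs_fps a oo (fps_X + fps_X ^ N * (1 + fps_X)) = Abs_fps a * (Abs_fps a oo fps_X ^ N)"
proof -
  define Z :: "'a fps" where "Z = fps_X + fps_X ^ N * (1 + fps_X)"
  have XN0: "(fps_X ^ N :: 'a fps) $ 0 = 0" using N by (simp add: fps_X_power_nth)
  have Z0: "Z $ 0 = 0" using XN0 by (simp add: Z_def)
  have X0: "(fps_X :: 'a fps) $ 0 = 0" by simp
  have "(1 + fps_X) * (1 + fps_X ^ N) = (1 + Z :: 'a fps)" by (simp add: Z_def algebra_simps)
  then have eq: "1 + fps_to_fls Z = (1 + fps_to_fls fps_X) * (1 + fps_to_fls (fps_X ^ N :: 'a fps))"
    by (metis fls_times_fps_to_fls fps_one_to_fls fps_to_fls_plus)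
  have u1: "1 + fps_to_fls (fps_X :: 'a fps) \<in> UK" using X0 UK_iff by blast
  have u2: "1 + fps_to_fls (fps_X ^ N :: 'a fps) \<in> UK" using XN0 UK_iff by blast
  have "fps_to_fls (Abs_fps a oo Z) = f (1 + fps_to_fls Z)" by (rule f_eval[OF hs Z0, symmetric])
  also have "\<dots> = f (1 + fps_to_fls fps_X) * f (1 + fps_to_fls (fps_X ^ N))"
    using mult u1 u2 eq by simp
  also have "\<dots> = fps_to_fls (Abs_fps a oo fps_X) * fps_to_fls (Abs_fps a oo fps_X ^ N)"
    using f_eval[OF hs X0] f_eval[OF hs XN0] by simp
  also have "\<dots> = fps_to_fls (Abs_fps a * (Abs_fps a oo fps_X ^ N))"
    by (simp add: fls_times_fps_to_fls)
  finally show ?thesis unfolding Z_def by simp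
qed



lemma bridge_mult:
  fixes b :: "'a::field fps"
  assumes b0: "b $ 0 = 0"
  shows "(\<lambda>n. fps_to_fls G * (fls_const (c n) * fps_to_fls b ^ n)) sums fps_to_fls (G * (Abs_fps c oo b))"
  unfolding sums_def
proof (rule fls_tendsto)
  fix N k assume k: "k < int N"
  define Q where "Q = (\<Sum>n<N. fps_const (c n) * b ^ n)"
  have eq: "(\<Sum>n<N. fps_to_fls G * (fls_const (c n) * fps_to_fls b ^ n)) = fps_to_fls (G * Q)"
    by (simp add: Q_def fps_to_fls_sum fls_times_fps_to_fls fps_to_fls_power sum_distrib_left)
  have van: "(Q - (Abs_fps c oo b)) $ j = 0" if "j < N" for j
    using compose_trunc[OF b0 that, of c] by (simp add: Q_def fps_sub_nth)
  have van2: "(G * (Q - (Abs_fps c oo b))) $ j = 0" if j: "j < N" for j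
    unfolding fps_mult_nth by (rule sum.neutral) (use van j in auto)
  show "((\<Sum>n<N. fps_to_fls G * (fls_const (c n) * fps_to_fls b ^ n)) - fps_to_fls (G * (Abs_fps c oo b))) $$ k = 0"
  proof (cases "k < 0")
    case True then show ?thesis by (simp add: eq flip: fps_to_fls_minus)
  next
    case False
    then have "nat k < N" using k by linarith
    then show ?thesis using False van2[of "nat k"] by (simp add: eq right_diff_distrib flip: fps_to_fls_minus)
  qed
qed

lemma dist_lt_vanish:
  fixes x y :: "'b::group_add fls"
  assumes d: "dist x y < (1/2::real)^N" and k: "k \<le> int N"
  shows "(x - y) $$ k = 0"
proof (cases "x = y")
  case True then show ?thesis by simp
next
  case False
  define s where "s = fls_subdegree (x - y)"
  have hN: "(1/2::real)^N \<le> 1" by (simp add: power_le_one)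
  show ?thesis
  proof (cases "0 \<le> s")
    case False
    then have "dist x y = 2 ^ nat (- s)" using \<open>x \<noteq> y\<close> unfolding dist_fls_def s_def by auto
    moreover have "(1::real) \<le> 2 ^ nat (- s)" by simp
    ultimately show ?thesis using d hN by linarith
  next
    case True
    then have "dist x y = inverse (2 ^ nat s)" using \<open>x \<noteq> y\<close> unfolding dist_fls_def s_def by auto
    with d have "inverse ((2::real) ^ nat s) < inverse (2 ^ N)"
      by (simp only: power_one_over inverse_eq_divide)
    then have "(2::real) ^ N < 2 ^ nat s" by (simp add: inverse_less_iff_less)
    then have "N < nat s" by (simp add: power_strict_increasing_iff)
    then have "k < fls_subdegree (x - y)" using k True s_def by linarith
    then show ?thesis by (rule fls_eq0_below_subdegree)
  qed
qed

lemma UK_mult: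
  assumes "u \<in> UK" "v \<in> (UK :: 'a::{field,finite} fls set)"
  shows "u * v \<in> UK"
proof -
  obtain c where c: "c $ 0 = 0" "u = 1 + fps_to_fls c" using assms(1) UK_iff by blast
  obtain d where d: "d $ 0 = 0" "v = 1 + fps_to_fls d" using assms(2) UK_iff by blast
  have "u * v = 1 + fps_to_fls (c + d + c * d)" using c d by (simp add: algebra_simps fls_times_fps_to_fls)
  moreover have "(c + d + c * d) $ 0 = 0" using c d by simp
  ultimately show ?thesis using UK_iff by blast
qed

lemma part2a_lemma:
  fixes f :: "'a::{field,finite} fls \<Rightarrow> 'a fls" and a :: "nat \<Rightarrow> 'a"
  assumes mult: "\<forall>u\<in>UK. \<forall>v\<in>UK. f (u * v) = f u * f v"
    and a0: "a 0 = 1" and pf: "\<forall>n. a n \<in> prime_subfield"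
    and hs: "\<forall>x \<in> MK. (\<lambda>n. fls_const (a n) * x ^ n) sums f (1 + x)"
    and vanish: "\<And>k. \<not> CHAR('a) dvd k \<Longrightarrow> a k = 0"
  shows "\<exists>g\<in>LambdaK. \<forall>x\<in>MK. f (1 + x) = g (1 + x) ^ CHAR('a)"
proof -
  define p where "p = CHAR('a)"
  have p0: "p > 0" unfolding p_def using prime_gt_0_nat[OF prime_CHAR_ff[where 'a='a]] .
  define B where "B = Abs_fps (\<lambda>n. a (p * n))"
  define g where "g u = fps_to_fls (B oo (fls_regpart u - 1))" for u :: "'a fls"
  have gform: "g (1 + fps_to_fls c) = fps_to_fls (B oo c)" for c
  proof -
    have "1 + fps_to_fls c = fps_to_fls (1 + c)" by simp
    then show ?thesis unfolding g_def by (simp only: fls_regpart_fps_trivial) simp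
  qed
  have key: "(B oo c) ^ p = Abs_fps a oo c" if c0: "c $ 0 = 0" for c
  proof (rule fps_ext)
    fix k
    define N where "N = Suc k"
    define Q where "Q = (\<Sum>n<N. fps_const (a (p * n)) * c ^ n)"
    have agree1: "\<forall>j<N. ((B oo c) - Q) $ j = 0"
      using compose_trunc[OF c0, of _ N "\<lambda>n. a (p * n)"] by (simp add: B_def Q_def fps_sub_nth)
    have "(B oo c) ^ p = ((B oo c) - Q) ^ p + Q ^ p"
      unfolding p_def by (metis frob_fps diff_add_cancel)
    then have "((B oo c) ^ p) $ k = (Q ^ p) $ k"
      using frob_power_vanish[OF agree1, of k] by (simp add: N_def p_def)
    also have "Q ^ p = (\<Sum>n<N. fps_const (a (p * n)) * c ^ (p * n))"
      unfolding Q_def p_def frob_sum_fps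
    proof (rule sum.cong[OF refl])
      fix n
      have "a (CHAR('a) * n) ^ CHAR('a) = a (CHAR('a) * n)" using pf prime_subfield_frob by blast
      then show "(fps_const (a (CHAR('a) * n)) * c ^ n) ^ CHAR('a) = fps_const (a (CHAR('a) * n)) * c ^ (CHAR('a) * n)"
        by (simp add: power_mult_distrib fps_const_power power_mult mult.commute)
    qed
    also have "\<dots> = (\<Sum>i<p * N. fps_const (a i) * c ^ i)"
    proof -
      have "(\<Sum>i<p * N. fps_const (a i) * c ^ i) = (\<Sum>i\<in>(\<lambda>n. p * n) ` {..<N}. fps_const (a i) * c ^ i)"
      proof (rule sum.mono_neutral_right)
        show "(\<lambda>n. p * n) ` {..<N} \<subseteq> {..<p * N}" using p0 by auto
        show "\<forall>i\<in>{..<p * N} - (\<lambda>n. p * n) ` {..<N}. fps_const (a i) * c ^ i = 0"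
        proof
          fix i assume i: "i \<in> {..<p * N} - (\<lambda>n. p * n) ` {..<N}"
          have "\<not> p dvd i"
          proof
            assume "p dvd i"
            then obtain n where n: "i = p * n" by (auto elim: dvdE)
            with i p0 have "n < N" by auto
            with n i show False by auto
          qed
          then show "fps_const (a i) * c ^ i = 0" using vanish p_def by simp
        qed
      qed auto
      also have "\<dots> = (\<Sum>n<N. fps_const (a (p * n)) * c ^ (p * n))"
        by (rule sum.reindex_cong[of "\<lambda>n. p * n"]) (use p0 in \<open>auto simp: inj_on_def\<close>)
      finally show ?thesis by simp
    qed
    also have "\<dots> $ k = (Abs_fps a oo c) $ k"
    proof -
      have "1 * Suc k \<le> p * Suc k" using p0 by (intro mult_le_mono1) simp
      then have "k < p * N" unfolding N_def by simp
      then show ?thesis using compose_trunc[OF c0, of k "p * N" a] by simp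
    qed
    finally show "((B oo c) ^ p) $ k = (Abs_fps a oo c) $ k" .
  qed
  have gpow: "g u ^ p = f u" if u: "u \<in> UK" for u
  proof -
    obtain c where c: "c $ 0 = 0" "u = 1 + fps_to_fls c" using u UK_iff by blast
    have "g u ^ p = fps_to_fls ((B oo c) ^ p)" using c by (simp add: gform fps_to_fls_power)
    also have "\<dots> = fps_to_fls (Abs_fps a oo c)" by (simp add: key[OF c(1)])
    also have "\<dots> = f u" using f_eval[OF hs c(1)] c(2) by simp
    finally show ?thesis .
  qed
  have gUK: "g u \<in> UK" if u: "u \<in> UK" for u
  proof -
    obtain c where c: "c $ 0 = 0" "u = 1 + fps_to_fls c" using u UK_iff by blast
    define d where "d = (B oo c) - 1"
    have "d $ 0 = 0" using a0 by (simp add: d_def B_def)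
    moreover have "g u = 1 + fps_to_fls d" using c by (simp add: gform d_def)
    ultimately show ?thesis using UK_iff by blast
  qed
  have gmult: "g (u * v) = g u * g v" if "u \<in> UK" "v \<in> UK" for u v
  proof (rule frob_inj_fls)
    have "g (u * v) ^ CHAR('a) = f (u * v)" using gpow UK_mult that p_def by blast
    also have "\<dots> = f u * f v" using mult that by blast
    also have "\<dots> = (g u * g v) ^ CHAR('a)" using gpow that p_def by (simp add: power_mult_distrib)
    finally show "g (u * v) ^ CHAR('a) = (g u * g v) ^ CHAR('a)" .
  qed
  have gvan: "(g u - g v) $$ k = 0"
    if uv: "u \<in> UK" "v \<in> UK" and van: "\<forall>k<int M. (u - v) $$ k = 0" and k: "k < int M" for u v M k
  proof -
    obtain c where c: "c $ 0 = 0" "u = 1 + fps_to_fls c" using uv(1) UK_iff by blast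
    obtain d where d: "d $ 0 = 0" "v = 1 + fps_to_fls d" using uv(2) UK_iff by blast
    have uv': "u - v = fps_to_fls (c - d)" using c d by simp
    have cd: "\<forall>j<M. c $ j = d $ j"
    proof (intro allI impI)
      fix j assume "j < M"
      then have "(u - v) $$ int j = 0" using van by simp
      then show "c $ j = d $ j" using uv' by (simp add: fps_sub_nth)
    qed
    have "g u - g v = fps_to_fls ((B oo c) - (B oo d))" using c d by (simp add: gform)
    then show ?thesis using k compose_agree[OF cd, of "nat k" B] by (cases "k < 0") (simp_all add: fps_sub_nth)
  qed
  have lim2: "(\<lambda>n. (1/2::real)^n) \<longlonglongrightarrow> 0" by (rule LIMSEQ_realpow_zero) auto
  have gcont: "continuous_on UK g"
    unfolding continuous_on_iff
  proof (intro ballI allI impI)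
    fix v :: "'a fls" and e :: real assume v: "v \<in> UK" and e: "0 < e"
    obtain N where N: "(1/2::real)^N < e"
      using order_tendstoD(2)[OF lim2 e] by (auto simp: eventually_sequentially)
    show "\<exists>d>0. \<forall>u\<in>UK. dist u v < d \<longrightarrow> dist (g u) (g v) < e"
    proof (intro exI[of _ "(1/2::real)^N"] conjI ballI impI)
      show "(0::real) < (1/2)^N" by simp
      fix u assume u: "u \<in> UK" and d: "dist u v < (1/2)^N"
      have van: "\<forall>k<int (Suc N). (u - v) $$ k = 0" using dist_lt_vanish[OF d] by auto
      have "dist (g u) (g v) \<le> (1/2)^(Suc N)" by (rule dist_fls_le) (rule gvan[OF u v van])
      also have "(1/2::real)^(Suc N) \<le> (1/2)^N" by (rule power_decreasing) auto
      finally show "dist (g u) (g v) < e" using N by linarith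
    qed
  qed
  have ganal: "locally_analyticK g"
    unfolding locally_analyticK_def
  proof
    fix \<alpha> :: "'a fls" assume \<alpha>: "\<alpha> \<in> UK"
    obtain c where c: "c $ 0 = 0" "\<alpha> = 1 + fps_to_fls c" using \<alpha> UK_iff by blast
    define P where "P = 1 + c"
    have P0: "P $ 0 = 1" using c by (simp add: P_def)
    have \<alpha>P: "\<alpha> = fps_to_fls P" using c by (simp add: P_def)
    have Pnz: "P \<noteq> 0" using P0 by auto
    have \<alpha>nz: "\<alpha> \<noteq> 0" using \<alpha>P Pnz by simp
    define \<rho> where "\<rho> = \<alpha> * fls_X"
    have \<rho>nz: "\<rho> \<noteq> 0" using \<alpha>nz by (simp add: \<rho>_def)
    have "\<rho> = fps_to_fls (P * fps_X)" by (simp add: \<rho>_def \<alpha>P fls_times_fps_to_fls)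
    moreover have "(P * fps_X) $ 0 = 0" by simp
    ultimately have "\<rho> \<in> MK" using MK_iff by blast
    then have \<rho>lt: "absK \<rho> < 1" by (simp add: MK_def)
    have ballUK: "ballK \<alpha> (absK \<rho>) \<subseteq> UK"
    proof
      fix u assume "u \<in> ballK \<alpha> (absK \<rho>)"
      then have "absK (u - \<alpha>) < 1" using \<rho>lt by (simp add: ballK_def)
      then have "u - \<alpha> \<in> MK" by (simp add: MK_def)
      then obtain d where d: "d $ 0 = 0" "u - \<alpha> = fps_to_fls d" using MK_iff by blast
      have "u = \<alpha> + (u - \<alpha>)" by simp
      also have "\<dots> = 1 + fps_to_fls (c + d)" using c d by simp
      finally have "u = 1 + fps_to_fls (c + d)" .
      moreover have "(c + d) $ 0 = 0" using c d by simp
      ultimately show "u \<in> UK" using UK_iff by blast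
    qed
    define cc where "cc n = g \<alpha> * fls_const (a (p * n)) * fls_X ^ n" for n
    have g\<alpha>: "g \<alpha> = fps_to_fls (B oo c)" using c by (simp add: gform)
    have cc_fps: "cc n = fps_to_fls ((B oo c) * fps_const (a (p*n)) * fps_X ^ n)" for n
      by (simp add: cc_def g\<alpha> fls_times_fps_to_fls fps_to_fls_power)
    have cclim: "cc \<longlonglongrightarrow> 0"
    proof (rule fls_tendsto)
      fix N k assume k: "k < int N"
      have "k < 0 \<or> nat k < N" using k by linarith
      then show "(cc N - 0) $$ k = 0" by (auto simp: cc_fps fps_X_power_mult_right_nth)
    qed
    have sums: "(\<lambda>n. cc n * ((u - \<alpha>) / \<rho>) ^ n) sums g u" if u: "u \<in> ballK \<alpha> (absK \<rho>)" for u
    proof -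
      have uUK: "u \<in> UK" using u ballUK by blast
      define iP where "iP = inverse P"
      have PiP: "P * iP = 1" unfolding iP_def using P0 by (simp add: inverse_mult_eq_1')
      have invA: "inverse \<alpha> = fps_to_fls iP"
        by (rule inverse_unique) (simp add: \<alpha>P fls_times_fps_to_fls[symmetric] PiP)
      have iP0: "(iP - 1) $ 0 = 0" using P0 by (simp add: iP_def)
      have "inverse \<alpha> = 1 + fps_to_fls (iP - 1)" by (simp add: invA)
      then have iUK: "inverse \<alpha> \<in> UK" using iP0 UK_iff by blast
      define w where "w = u * inverse \<alpha>"
      have wUK: "w \<in> UK" using UK_mult[OF uUK iUK] w_def by simp
      obtain e where e: "e $ 0 = 0" "w = 1 + fps_to_fls e" using wUK UK_iff by blast
      have "\<alpha> * w = u" using \<alpha>nz by (simp add: w_def)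
      then have guw: "g u = g \<alpha> * g w" using gmult[OF \<alpha> wUK] by simp
      have gw: "g w = fps_to_fls (B oo e)" using e gform by simp
      have S: "(\<lambda>n. fls_const (a (p*n)) * fps_to_fls e ^ n) sums g w"
        using bridge[OF e(1), of "\<lambda>n. a (p*n)"] unfolding gw B_def .
      have S2: "(\<lambda>n. g \<alpha> * (fls_const (a (p*n)) * fps_to_fls e ^ n)) sums (g \<alpha> * g w)"
        using bridge_mult[OF e(1), of "B oo c" "\<lambda>n. a (p*n)"] unfolding g\<alpha> gw B_def
        by (simp only: fls_times_fps_to_fls)
      have eeq: "fps_to_fls e = fls_X * ((u - \<alpha>) / \<rho>)"
      proof -
        have "fps_to_fls e = w - 1" using e by simp
        also have "\<dots> = fls_X * ((u - \<alpha>) / \<rho>)" using \<alpha>nz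
          by (simp add: w_def \<rho>_def field_simps)
        finally show ?thesis .
      qed
      have fe: "(\<lambda>n. g \<alpha> * (fls_const (a (p*n)) * fps_to_fls e ^ n)) = (\<lambda>n. cc n * ((u - \<alpha>) / \<rho>) ^ n)"
        by (rule ext) (simp only: eeq cc_def power_mult_distrib mult_ac)
      show ?thesis using S2 unfolding fe guw[symmetric] .
    qed
    show "\<exists>\<rho>. \<rho> \<noteq> 0 \<and> ballK \<alpha> (absK \<rho>) \<subseteq> UK \<and> analytic_on_ballK g \<alpha> \<rho>"
      unfolding analytic_on_ballK_def
      using \<rho>nz ballUK continuous_on_subset[OF gcont ballUK] cclim sums by blast
  qed
  have "g \<in> LambdaK" using gUK gmult ganal by (simp add: LambdaK_def)
  moreover have "\<forall>x\<in>MK. f (1 + x) = g (1 + x) ^ CHAR('a)"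
    using gpow p_def by (simp add: UK_def)
  ultimately show ?thesis by blast
qed

theorem lemma2p2:
  fixes f :: "'a::{field,finite} fls \<Rightarrow> 'a fls" and a :: "nat \<Rightarrow> 'a"
  assumes "f \<in> LambdaK"
    and "a 0 = 1" and "\<forall>n. a n \<in> prime_subfield"
    and "\<forall>x \<in> MK. (\<lambda>n. fls_const (a n) * x ^ n) sums f (1 + x)"
  shows "(\<forall>m. a m = 0 \<longleftrightarrow>
            (\<forall>x \<in> MK. (\<lambda>j. of_nat ((j + m) choose m) * fls_const (a (j + m)) * x ^ j) sums 0))
       \<and> (a 1 = 0 \<longleftrightarrow> (\<exists>g \<in> LambdaK. \<forall>x \<in> MK. f (1 + x) = g (1 + x) ^ CHAR('a)))"
proof -
  from assms(1) have mult: "\<forall>u\<in>UK. \<forall>v\<in>UK. f (u * v) = f u * f v" by (simp add: LambdaK_def)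
  note hs = assms(4)
  have K: "Ehas a m * (1 + fps_X) ^ m = fps_const (a m) * Abs_fps a" for m
    by (rule K_from_FE) (rule FE_f[OF mult hs])
  have EZ: "Ehas a m = 0" if am: "a m = 0" for m
  proof -
    from am have "Ehas a m * (1 + fps_X) ^ m = 0" using K[of m] by simp
    moreover have "(1 + fps_X :: 'a fps) \<noteq> 0"
    proof
      assume "(1 + fps_X :: 'a fps) = 0"
      then have "(1 + fps_X :: 'a fps) $ 0 = 0" by simp
      then show False by simp
    qed
    then have "(1 + fps_X :: 'a fps) ^ m \<noteq> 0" by simp
    ultimately show ?thesis by simp
  qed
  have X0: "(fps_X :: 'a fps) $ 0 = 0" by simp
  have XMK: "fls_X \<in> (MK :: 'a fls set)"
    using MK_iff[THEN iffD2, OF exI[of _ "fps_X :: 'a fps"]] by simp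
  have XUK: "1 + fls_X \<in> (UK :: 'a fls set)" using XMK by (simp add: UK_def)
  have fX: "f (1 + fls_X) = fps_to_fls (Abs_fps a)" using f_eval[OF hs X0] by simp
  have trm: "of_nat ((j + m) choose m) * fls_const (a (j + m)) * x ^ j
      = fls_const (of_nat ((j + m) choose m) * a (j + m)) * x ^ j" for j m and x :: "'a fls"
    by (simp add: fls_of_nat)
  have part1: "a m = 0 \<longleftrightarrow>
            (\<forall>x \<in> MK. (\<lambda>j. of_nat ((j + m) choose m) * fls_const (a (j + m)) * x ^ j) sums 0)" for m
  proof
    assume "a m = 0"
    then have E: "Ehas a m = 0" by (rule EZ)
    have c0: "of_nat ((j + m) choose m) * a (j + m) = 0" for j
      using arg_cong[OF E, of "\<lambda>F. F $ j"] by (simp add: Ehas_def)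
    have "(\<lambda>j. of_nat ((j + m) choose m) * fls_const (a (j + m)) * x ^ j) = (\<lambda>j. 0)" for x :: "'a fls"
      by (rule ext) (simp only: trm c0 fls_const_0 mult_zero_left)
    then show "\<forall>x \<in> MK. (\<lambda>j. of_nat ((j + m) choose m) * fls_const (a (j + m)) * x ^ j) sums 0"
      by (simp only: sums_zero ball_simps) blast
  next
    assume H: "\<forall>x \<in> MK. (\<lambda>j. of_nat ((j + m) choose m) * fls_const (a (j + m)) * x ^ j) sums 0"
    have S1: "(\<lambda>j. fls_const (of_nat ((j + m) choose m) * a (j + m)) * fps_to_fls fps_X ^ j) sums
        fps_to_fls (Abs_fps (\<lambda>j. of_nat ((j + m) choose m) * a (j + m)) oo fps_X)"
      by (rule bridge[OF X0])
    have S2: "(\<lambda>j. fls_const (of_nat ((j + m) choose m) * a (j + m)) * fps_to_fls fps_X ^ j) sums 0"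
      using H[rule_format, OF XMK] unfolding trm by simp
    have "fps_to_fls (Ehas a m) = 0" using sums_unique2[OF S1 S2] by (simp add: Ehas_def)
    then have "Ehas a m $ 0 = 0" by simp
    then show "a m = 0" by (simp add: Ehas_def)
  qed
  have part2b: "a 1 = 0" if ex: "\<exists>g \<in> LambdaK. \<forall>x \<in> MK. f (1 + x) = g (1 + x) ^ CHAR('a)"
  proof -
    obtain g where g: "g \<in> LambdaK" "\<forall>x \<in> MK. f (1 + x) = g (1 + x) ^ CHAR('a)" using ex by blast
    have "g (1 + fls_X) \<in> UK" using g(1) XUK by (simp add: LambdaK_def)
    then obtain c where c: "c $ 0 = 0" "g (1 + fls_X) = 1 + fps_to_fls c" using UK_iff by blast
    have "fps_to_fls (Abs_fps a) = (1 + fps_to_fls c) ^ CHAR('a)" using g(2) XMK c(2) fX by simp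
    also have "\<dots> = fps_to_fls ((1 + c) ^ CHAR('a))" by (simp add: fps_to_fls_power)
    also have "(1 + c) ^ CHAR('a) = 1 + c ^ CHAR('a)" by (simp add: frob_fps)
    finally have "Abs_fps a = 1 + c ^ CHAR('a)" by (metis fps_to_fls_eq_iff fps_to_fls_plus fps_one_to_fls)
    then have "a 1 = (c ^ CHAR('a)) $ 1" by (metis fps_nth_Abs_fps fps_add_nth fps_one_nth add_0 one_neq_zero)
    also have "\<dots> = 0"
    proof -
      have "1 < CHAR('a)" using prime_gt_1_nat[OF prime_CHAR_ff[where 'a='a]] .
      then show ?thesis using startsby_zero_power_prefix[OF c(1)] by blast
    qed
    finally show ?thesis .
  qed
  have part2a: "\<exists>g \<in> LambdaK. \<forall>x \<in> MK. f (1 + x) = g (1 + x) ^ CHAR('a)" if a1: "a 1 = 0"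
  proof (rule part2a_lemma[OF mult assms(2) assms(3) hs])
    fix k assume nd: "\<not> CHAR('a) dvd k"
    then obtain j where j: "k = Suc j" by (cases k) auto
    have E: "Ehas a 1 = 0" by (rule EZ[OF a1])
    have "(Ehas a 1) $ j = of_nat (Suc j) * a (Suc j)" by (simp add: Ehas_def)
    then have "of_nat (Suc j) * a (Suc j) = 0" using E by simp
    moreover have "(of_nat (Suc j) :: 'a) \<noteq> 0" using nd j of_nat_eq_0_iff_char_dvd[of "Suc j", where ?'a='a] by blast
    ultimately show "a k = 0" using j by simp
  qed
  show ?thesis using part1 part2a part2b by blast
qed

end
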